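(* Let $D\ge 1$, $\mu>1$ and $\theta>0$. Let $(V,T)$ be a Galton–Watson tree of depth $D$ (truncated at generation $D$) with root $v_o$ and offspring distribution of mean $\mu$, and let $V_d$ be the set of nodes at depth $d$. Set \[ \rho_d:=\frac{\theta(\mu-1)}{(\theta-1)(\mu-1)+\mu^d-1},\quad d=1,\dots,D-1,\qquad \rho_D:=0. \] Conditionally on the tree, let $\{Z_v, v\in V\setminus\{v_o\}\}$ be independent Bernoulli variables with $\mathbf{E}[Z_v]=\rho_d$ for $v\in V_d$, and assign labels as follows: the root gets label $0$; in order of increasing depth, a node with $Z_v=0$ takes its parent's label, and a node with $Z_v=1$ takes a new label not used before. Then the expected number of distinct labels among all vertices of the tree is \[ K(\mu,D,\theta)=1+\theta(\mu-1)\sum_{d=1}^{D-1}\frac{1}{1+(\theta\mu-\theta-\mu)\mu^{-d}}. \]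
   Context: The number of distinct labels equals $1+\sum_{v\ne v_o}Z_v$. For $\theta>0$, $\mu>1$ the numbers $\rho_d$ lie in $(0,1]$ with $\rho_1=1$. *)

theory Defs
  imports "HOL-Probability.Probability"
begin

text \<open>Ulam--Harris encoding of a Galton--Watson tree. A potential node is a list of
  child indices, written with the LAST step first: (i # u) is the i-th child of u. Each potential node u carries an offspring count
  xi u (iid with law p) and a Bernoulli mark Z u.\<close>

fun in_tree :: "(nat list \<Rightarrow> nat) \<Rightarrow> nat list \<Rightarrow> bool" where
  "in_tree xi [] = True"
| "in_tree xi (i # u) = (in_tree xi u \<and> i < xi u)"

definition tree_nodes :: "(nat list \<Rightarrow> nat) \<Rightarrow> nat \<Rightarrow> nat list set" where
  "tree_nodes xi D = {v. in_tree xi v \<and> length v \<le> D}"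

text \<open>Label of a node: the root gets label [] (``label 0''); a node with Z = 1 gets a fresh
  label (its own name, never used before); a node with Z = 0 inherits its parent's label.\<close>
fun lab :: "(nat list \<Rightarrow> bool) \<Rightarrow> nat list \<Rightarrow> nat list" where
  "lab Z [] = []"
| "lab Z (i # u) = (if Z (i # u) then i # u else lab Z u)"

definition rho :: "real \<Rightarrow> real \<Rightarrow> nat \<Rightarrow> nat \<Rightarrow> real" where
  "rho \<mu> \<theta> D d =
     (if 1 \<le> d \<and> d < D then \<theta> * (\<mu> - 1) / ((\<theta> - 1) * (\<mu> - 1) + \<mu> ^ d - 1) else 0)"

text \<open>Joint law: offspring counts and marks, all independent; the mark at depth d is
  Bernoulli(rho_d). (Marks independent of the tree, hence conditionally independent
  given the tree with the prescribed means.)\<close>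
definition GW_space :: "nat pmf \<Rightarrow> real \<Rightarrow> real \<Rightarrow> nat \<Rightarrow> (nat list \<Rightarrow> nat \<times> bool) measure" where
  "GW_space p \<mu> \<theta> D =
     (\<Pi>\<^sub>M u\<in>UNIV. measure_pmf (pair_pmf p (bernoulli_pmf (rho \<mu> \<theta> D (length u)))))"

definition num_labels :: "nat \<Rightarrow> (nat list \<Rightarrow> nat \<times> bool) \<Rightarrow> nat" where
  "num_labels D \<omega> = card (lab (snd \<circ> \<omega>) ` tree_nodes (fst \<circ> \<omega>) D)"

definition K :: "real \<Rightarrow> nat \<Rightarrow> real \<Rightarrow> real" where
  "K \<mu> D \<theta> = 1 + \<theta> * (\<mu> - 1) *
      (\<Sum>d = 1..D - 1. 1 / (1 + (\<theta> * \<mu> - \<theta> - \<mu>) * inverse (\<mu> ^ d)))"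

end

theory Submission
  imports Defs
begin

lemma in_tree_iff: "in_tree xi v \<longleftrightarrow> (\<forall>k<length v. v!k < xi (drop (Suc k) v))"
proof (induction v)
  case Nil then show ?case by simp
next
  case (Cons i u)
  show ?case
  proof
    assume "in_tree xi (i # u)"
    then show "\<forall>k<length (i # u). (i # u) ! k < xi (drop (Suc k) (i # u))"
      using Cons by (auto simp: less_Suc_eq_0_disj)
  next
    assume H: "\<forall>k<length (i # u). (i # u) ! k < xi (drop (Suc k) (i # u))"
    have "i < xi u" using H[rule_format, of 0] by simp
    moreover have "\<forall>k<length u. u!k < xi (drop (Suc k) u)"
      using H by (metis Suc_less_eq drop_Suc_Cons length_Cons nth_Cons_Suc)
    ultimately show "in_tree xi (i # u)" using Cons by simp
  qed
qed

lemma in_tree_drop: "in_tree xi v \<Longrightarrow> in_tree xi (drop k v)"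
  by (induction v arbitrary: k) (auto simp: drop_Cons split: nat.splits)

lemma lab_suffix: "\<exists>k. lab Z v = drop k v \<and> (lab Z v = [] \<or> Z (lab Z v))"
proof (induction v)
  case Nil then show ?case by simp
next
  case (Cons i u)
  then obtain k where "lab Z u = drop k u \<and> (lab Z u = [] \<or> Z (lab Z u))" by blast
  then show ?case
    by (cases "Z (i # u)") (auto intro: exI[of _ 0] exI[of _ "Suc k"])
qed

lemma labels_eq: "lab Z ` tree_nodes xi D = {v. length v \<le> D \<and> in_tree xi v \<and> (v = [] \<or> Z v)}"
proof
  show "lab Z ` tree_nodes xi D \<subseteq> {v. length v \<le> D \<and> in_tree xi v \<and> (v = [] \<or> Z v)}"
  proof
    fix w assume "w \<in> lab Z ` tree_nodes xi D"
    then obtain v where v: "in_tree xi v" "length v \<le> D" "w = lab Z v"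
      by (auto simp: tree_nodes_def)
    obtain k where "lab Z v = drop k v \<and> (lab Z v = [] \<or> Z (lab Z v))" using lab_suffix by blast
    then show "w \<in> {v. length v \<le> D \<and> in_tree xi v \<and> (v = [] \<or> Z v)}"
      using v in_tree_drop[OF v(1)] by auto
  qed
next
  show "{v. length v \<le> D \<and> in_tree xi v \<and> (v = [] \<or> Z v)} \<subseteq> lab Z ` tree_nodes xi D"
  proof
    fix w assume w: "w \<in> {v. length v \<le> D \<and> in_tree xi v \<and> (v = [] \<or> Z v)}"
    have "lab Z w = w" using w by (cases w) auto
    then show "w \<in> lab Z ` tree_nodes xi D" using w
      by (metis (mono_tags, lifting) image_eqI mem_Collect_eq tree_nodes_def)
  qed
qed

lemma finite_tree: "finite {v. in_tree xi v \<and> length v \<le> D}"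
proof (induction D)
  case 0
  have "{v. in_tree xi v \<and> length v \<le> 0} = {[]}" by auto
  then show ?case by simp
next
  case (Suc D)
  let ?S = "{v. in_tree xi v \<and> length v \<le> D}"
  have "{v. in_tree xi v \<and> length v \<le> Suc D} \<subseteq> ?S \<union> (\<lambda>(u,i). i # u) ` (SIGMA u:?S. {..<xi u})"
  proof
    fix v assume v: "v \<in> {v. in_tree xi v \<and> length v \<le> Suc D}"
    show "v \<in> ?S \<union> (\<lambda>(u,i). i # u) ` (SIGMA u:?S. {..<xi u})"
    proof (cases v)
      case Nil then show ?thesis using v by auto
    next
      case (Cons i u) then show ?thesis using v by (auto intro!: image_eqI[of _ _ "(u,i)"])
    qed
  qed
  moreover have "finite (?S \<union> (\<lambda>(u,i). i # u) ` (SIGMA u:?S. {..<xi u}))"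
    using Suc by auto
  ultimately show ?case using finite_subset by blast
qed


definition Zset :: "nat list \<Rightarrow> (nat \<times> bool) set" where
  "Zset v = (if v = [] then UNIV else UNIV \<times> {True})"
definition Xs :: "nat list \<Rightarrow> nat list \<Rightarrow> (nat \<times> bool) set" where
  "Xs v u = (if length u = length v then Zset v else {v ! (length v - length u - 1)<..} \<times> UNIV)"
definition Jv :: "nat list \<Rightarrow> nat list set" where
  "Jv v = (\<lambda>k. drop k v) ` {..length v}"
definition Ev where
  "Ev M v = prod_emb UNIV M (Jv v) (Pi\<^sub>E (Jv v) (Xs v))"

lemma inj_drop: "inj_on (\<lambda>k. drop k v) {..length v}"
  by (rule inj_onI) (metis atMost_iff diff_diff_cancel length_drop)

lemma finite_Jv: "finite (Jv v)" by (simp add: Jv_def)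

lemma mem_Ev:
  assumes "\<And>u. space (M u) = UNIV"
  shows "\<omega> \<in> Ev M v \<longleftrightarrow> in_tree (fst \<circ> \<omega>) v \<and> (v = [] \<or> snd (\<omega> v))"
proof -
  have "\<omega> \<in> Ev M v \<longleftrightarrow> (\<forall>k\<le>length v. \<omega> (drop k v) \<in> Xs v (drop k v))"
    unfolding Ev_def prod_emb_iff using assms by (auto simp: Jv_def PiE_iff)
  also have "\<dots> \<longleftrightarrow> \<omega> v \<in> Zset v \<and> (\<forall>k<length v. \<omega> (drop (Suc k) v) \<in> {v!k<..} \<times> UNIV)"
  proof -
    have a: "(\<forall>k\<le>length v. P k) \<longleftrightarrow> P 0 \<and> (\<forall>k<length v. P (Suc k))" for P
      by (metis Suc_le_eq le0 not0_implies_Suc not_less_eq_eq)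
    have b: "Xs v (drop (Suc k) v) = {v!k<..} \<times> UNIV" if "k < length v" for k
      using that by (auto simp: Xs_def)
    show ?thesis unfolding a using b by (auto simp: Xs_def)
  qed
  also have "\<dots> \<longleftrightarrow> in_tree (fst \<circ> \<omega>) v \<and> (v = [] \<or> snd (\<omega> v))"
    unfolding in_tree_iff by (cases "\<omega> v") (auto simp: Zset_def mem_Times_iff)
  finally show ?thesis .
qed


lemma rho_bounds:
  assumes "\<mu> > 1" "\<theta> > 0"
  shows "0 \<le> rho \<mu> \<theta> D d \<and> rho \<mu> \<theta> D d \<le> 1"
proof (cases "1 \<le> d \<and> d < D")
  case True
  have "\<mu> ^ 1 \<le> \<mu> ^ d" using True assms by (intro power_increasing) auto
  then have "(\<theta> - 1) * (\<mu> - 1) + \<mu> ^ d - 1 \<ge> \<theta> * (\<mu> - 1)" by (simp add: algebra_simps)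
  moreover have "\<theta> * (\<mu> - 1) > 0" using assms by simp
  ultimately show ?thesis using True by (simp add: rho_def)
next
  case False then show ?thesis unfolding rho_def by auto
qed

lemma emeasure_fst_pair:
  "emeasure (measure_pmf (pair_pmf p B)) (A \<times> UNIV) = emeasure (measure_pmf p) A"
proof -
  have "A \<times> UNIV = fst -` A" by auto
  then show ?thesis by (metis emeasure_map_pmf map_fst_pair_pmf)
qed

lemma emeasure_snd_pair:
  "emeasure (measure_pmf (pair_pmf p B)) (UNIV \<times> A) = emeasure (measure_pmf B) A"
proof -
  have "UNIV \<times> A = snd -` A" by auto
  then show ?thesis by (metis emeasure_map_pmf map_snd_pair_pmf)
qed

lemma emeasure_Ev:
  fixes p :: "nat pmf" and D :: nat
  assumes "\<mu> > 1" "\<theta> > 0"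
  defines "M \<equiv> (\<lambda>u. measure_pmf (pair_pmf p (bernoulli_pmf (rho \<mu> \<theta> D (length u)))))"
  shows "emeasure (Pi\<^sub>M UNIV M) (Ev M v) =
     ennreal (if v = [] then 1 else rho \<mu> \<theta> D (length v)) * (\<Prod>k<length v. emeasure (measure_pmf p) {v!k<..})"
proof -
  have "emeasure (Pi\<^sub>M UNIV M) (Ev M v) = (\<Prod>j\<in>Jv v. emeasure (M j) (Xs v j))"
    unfolding Ev_def
    by (rule emeasure_PiM_emb) (auto simp: M_def finite_Jv prob_space_measure_pmf)
  also have "\<dots> = (\<Prod>k\<in>{..<Suc (length v)}. emeasure (M (drop k v)) (Xs v (drop k v)))"
    unfolding Jv_def using prod.reindex[OF inj_drop] lessThan_Suc_atMost by (simp add: comp_def)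
  also have "\<dots> = emeasure (M v) (Zset v) * (\<Prod>k<length v. emeasure (M (drop (Suc k) v)) (Xs v (drop (Suc k) v)))"
    by (subst prod.lessThan_Suc_shift) (simp add: Xs_def)
  also have "(\<Prod>k<length v. emeasure (M (drop (Suc k) v)) (Xs v (drop (Suc k) v)))
     = (\<Prod>k<length v. emeasure (measure_pmf p) {v!k<..})"
    by (intro prod.cong refl) (auto simp: Xs_def M_def emeasure_fst_pair)
  also have "emeasure (M v) (Zset v) = ennreal (if v = [] then 1 else rho \<mu> \<theta> D (length v))"
    using rho_bounds[OF assms(1,2), of D "length v"]
    by (auto simp: Zset_def M_def emeasure_snd_pair emeasure_pmf_single measure_pmf.emeasure_space_1)
  finally show ?thesis .
qed


lemma cons_split_integral:
  fixes h :: "nat list \<Rightarrow> ennreal"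
  assumes "h [] = 0"
  shows "(\<integral>\<^sup>+ v. h v \<partial>count_space UNIV) = (\<integral>\<^sup>+ i. \<integral>\<^sup>+ u. h (i # u) \<partial>count_space UNIV \<partial>count_space UNIV)"
proof -
  let ?g = "\<lambda>(i::nat, u::nat list). i # u"
  have r: "range ?g = {v. v \<noteq> []}" by (auto simp: neq_Nil_conv)
  have "(\<integral>\<^sup>+ v. h v \<partial>count_space UNIV) = (\<integral>\<^sup>+ v. h v \<partial>count_space (range ?g))"
    by (rule nn_integral_count_space_eq) (auto simp: r assms)
  also have "\<dots> = (\<integral>\<^sup>+ x. h (?g x) \<partial>count_space UNIV)"
    by (rule nn_integral_bij_count_space[symmetric]) (auto intro!: inj_on_imp_bij_betw inj_onI)
  also have "\<dots> = (\<integral>\<^sup>+ x. h (?g x) \<partial>(count_space UNIV \<Otimes>\<^sub>M count_space UNIV))"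
    by (rule nn_integral_count_space_prod_eq[symmetric])
  also have "\<dots> = (\<integral>\<^sup>+ i. \<integral>\<^sup>+ u. h (?g (i, u)) \<partial>count_space UNIV \<partial>count_space UNIV)"
  proof (rule sigma_finite_measure.nn_integral_fst[symmetric])
    show "sigma_finite_measure (count_space (UNIV :: nat list set))"
      by (rule sigma_finite_measure_count_space)
    have "count_space (UNIV :: nat set) \<Otimes>\<^sub>M count_space (UNIV :: nat list set) = count_space UNIV"
      by (simp add: pair_measure_countable)
    then show "(\<lambda>x. h (?g x)) \<in> borel_measurable (count_space UNIV \<Otimes>\<^sub>M count_space UNIV)"
      by simp
  qed
  finally show ?thesis by simp
qed

lemma level_integral:
  fixes q :: "nat \<Rightarrow> ennreal"
  shows "(\<integral>\<^sup>+ v. (\<Prod>k<length v. q (v!k)) * indicator {v. length v = d} v \<partial>count_space UNIV)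
         = (\<integral>\<^sup>+ i. q i \<partial>count_space UNIV) ^ d"
proof (induction d)
  case 0
  have "(\<integral>\<^sup>+ v. (\<Prod>k<length v. q (v!k)) * indicator {v. length v = 0} v \<partial>count_space UNIV)
      = (\<integral>\<^sup>+ v. indicator {[]::nat list} v \<partial>count_space UNIV)"
    by (rule nn_integral_cong) (auto split: split_indicator)
  then show ?case by simp
next
  case (Suc d)
  let ?G = "\<lambda>u. (\<Prod>k<length u. q (u!k)) * indicator {v. length v = d} u"
  have "(\<integral>\<^sup>+ v. (\<Prod>k<length v. q (v!k)) * indicator {v. length v = Suc d} v \<partial>count_space UNIV)
     = (\<integral>\<^sup>+ i. \<integral>\<^sup>+ u. (\<Prod>k<length (i#u). q ((i#u)!k)) * indicator {v. length v = Suc d} (i#u)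
          \<partial>count_space UNIV \<partial>count_space UNIV)"
    by (rule cons_split_integral) simp
  also have "\<dots> = (\<integral>\<^sup>+ i. \<integral>\<^sup>+ u. q i * ?G u \<partial>count_space UNIV \<partial>count_space UNIV)"
    by (intro nn_integral_cong) (simp del: prod.lessThan_Suc add: prod.lessThan_Suc_shift indicator_def mult.assoc)
  also have "\<dots> = (\<integral>\<^sup>+ i. q i * (\<integral>\<^sup>+ u. ?G u \<partial>count_space UNIV) \<partial>count_space UNIV)"
    by (intro nn_integral_cong nn_integral_cmult) simp
  also have "\<dots> = (\<integral>\<^sup>+ i. q i \<partial>count_space UNIV) * (\<integral>\<^sup>+ u. ?G u \<partial>count_space UNIV)"
    by (rule nn_integral_multc) simp
  finally show ?case using Suc by simp
qed

lemma mean_tail: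
  fixes p :: "nat pmf"
  shows "(\<integral>\<^sup>+ i. emeasure (measure_pmf p) {i<..} \<partial>count_space UNIV) = (\<integral>\<^sup>+ k. ennreal (real k) \<partial>measure_pmf p)"
proof -
  have "(\<integral>\<^sup>+ i. emeasure (measure_pmf p) {i<..} \<partial>count_space UNIV)
      = (\<integral>\<^sup>+ i. \<integral>\<^sup>+ k. indicator {i<..} k \<partial>measure_pmf p \<partial>count_space UNIV)"
    by simp
  also have "\<dots> = (\<integral>\<^sup>+ k. \<integral>\<^sup>+ i. indicator {i<..} k \<partial>count_space UNIV \<partial>measure_pmf p)"
    by (rule nn_integral_count_space_nn_integral[symmetric]) auto
  also have "\<dots> = (\<integral>\<^sup>+ k. \<integral>\<^sup>+ i. indicator {..<k} i \<partial>count_space UNIV \<partial>measure_pmf p)"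
    by (intro nn_integral_cong) (auto split: split_indicator)
  also have "\<dots> = (\<integral>\<^sup>+ k. ennreal (real k) \<partial>measure_pmf p)"
    by (intro nn_integral_cong) (simp add: ennreal_of_nat_eq_real_of_nat)
  finally show ?thesis .
qed


lemma arith_K:
  assumes "D \<ge> 1" "\<mu> > 1" "\<theta> > 0"
  shows "(\<Sum>d\<le>D. (if d = 0 then 1 else rho \<mu> \<theta> D d) * \<mu> ^ d) = K \<mu> D \<theta>"
proof -
  obtain D' where D: "D = Suc D'" using assms(1) by (cases D) auto
  let ?r = "\<lambda>d. (if d = 0 then 1 else rho \<mu> \<theta> D d) * \<mu> ^ d"
  have "(\<Sum>d\<le>D. ?r d) = 1 + (\<Sum>d\<le>D'. ?r (Suc d))"
    unfolding D by (subst sum.atMost_Suc_shift) simp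
  also have "(\<Sum>d\<le>D'. ?r (Suc d)) = (\<Sum>d<D'. ?r (Suc d))"
    by (simp add: lessThan_Suc_atMost[symmetric] D rho_def)
  also have "\<dots> = \<theta> * (\<mu> - 1) * (\<Sum>d<D'. 1 / (1 + (\<theta> * \<mu> - \<theta> - \<mu>) * inverse (\<mu> ^ Suc d)))"
    unfolding sum_distrib_left
  proof (intro sum.cong refl)
    fix d assume "d \<in> {..<D'}"
    then have dD: "Suc d < D" using D by simp
    have m1: "\<mu> ^ 1 \<le> \<mu> ^ Suc d" using assms by (intro power_increasing) auto
    have pos: "\<mu> ^ Suc d > 0" using assms by simp
    have den: "(\<theta> - 1) * (\<mu> - 1) + \<mu> ^ Suc d - 1 > 0"
    proof -
      have "(\<theta> - 1) * (\<mu> - 1) + \<mu> ^ Suc d - 1 \<ge> \<theta> * (\<mu> - 1)" using m1 by (simp add: algebra_simps)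
      moreover have "\<theta> * (\<mu> - 1) > 0" using assms by simp
      ultimately show ?thesis by linarith
    qed
    have e: "1 + (\<theta> * \<mu> - \<theta> - \<mu>) * inverse (\<mu> ^ Suc d) = ((\<theta> - 1) * (\<mu> - 1) + \<mu> ^ Suc d - 1) / \<mu> ^ Suc d"
    proof -
      have g: "1 + (\<theta> * \<mu> - \<theta> - \<mu>) * inverse m = ((\<theta> - 1) * (\<mu> - 1) + m - 1) / m" if "m > 0" for m :: real
        using that by (simp add: field_simps)
      show ?thesis using g[OF pos] .
    qed
    show "?r (Suc d) = \<theta> * (\<mu> - 1) * (1 / (1 + (\<theta> * \<mu> - \<theta> - \<mu>) * inverse (\<mu> ^ Suc d)))"
      unfolding e using dD pos den by (simp add: rho_def field_simps del: power_Suc)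
  qed
  also have "(\<Sum>d<D'. 1 / (1 + (\<theta> * \<mu> - \<theta> - \<mu>) * inverse (\<mu> ^ Suc d)))
      = (\<Sum>d = 1..D - 1. 1 / (1 + (\<theta> * \<mu> - \<theta> - \<mu>) * inverse (\<mu> ^ d)))"
    unfolding D by (simp add: sum.atLeast1_atMost_eq del: power_Suc)
  finally show ?thesis by (simp add: K_def)
qed


theorem lemma8p1:
  fixes p :: "nat pmf" and \<mu> \<theta> :: real and D :: nat
  assumes "D \<ge> 1" and "\<mu> > 1" and "\<theta> > 0"
    and "(\<integral>\<^sup>+ k. ennreal (real k) \<partial>measure_pmf p) = ennreal \<mu>"
  shows "(\<integral>\<^sup>+ \<omega>. ennreal (real (num_labels D \<omega>)) \<partial>GW_space p \<mu> \<theta> D) = ennreal (K \<mu> D \<theta>)"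
proof -
  define M where "M = (\<lambda>u::nat list. measure_pmf (pair_pmf p (bernoulli_pmf (rho \<mu> \<theta> D (length u)))))"
  have Om: "GW_space p \<mu> \<theta> D = Pi\<^sub>M UNIV M" by (simp add: GW_space_def M_def)
  have spM: "\<And>u. space (M u) = UNIV" by (simp add: M_def)
  define L0 where "L0 = {v :: nat list. length v \<le> D}"
  define q where "q = (\<lambda>i. emeasure (measure_pmf p) {i<..})"
  define r where "r = (\<lambda>d. if d = 0 then 1 else rho \<mu> \<theta> D d)"
  have r_nn: "0 \<le> r d" for d using rho_bounds[OF assms(2,3)] by (simp add: r_def)
  have EvS: "Ev M v \<in> sets (Pi\<^sub>M UNIV M)" for v
    unfolding Ev_def by (rule sets_PiM_I) (auto simp: finite_Jv M_def)
  have step1: "ennreal (real (num_labels D \<omega>)) = (\<integral>\<^sup>+ v. indicator (Ev M v) \<omega> \<partial>count_space L0)" for \<omega>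
  proof -
    define S where "S = {v. length v \<le> D \<and> in_tree (fst \<circ> \<omega>) v \<and> (v = [] \<or> (snd \<circ> \<omega>) v)}"
    have nl: "num_labels D \<omega> = card S" unfolding num_labels_def labels_eq S_def ..
    have fS: "finite S"
      by (rule finite_subset[OF _ finite_tree[of "fst \<circ> \<omega>" D]]) (auto simp: S_def)
    have SL: "S \<subseteq> L0" by (auto simp: S_def L0_def)
    have "(\<integral>\<^sup>+ v. indicator (Ev M v) \<omega> \<partial>count_space L0) = (\<integral>\<^sup>+ v. indicator S v \<partial>count_space L0)"
      by (rule nn_integral_cong) (auto simp: mem_Ev[OF spM] S_def L0_def split: split_indicator)
    also have "\<dots> = emeasure (count_space L0) S" using SL by (intro nn_integral_indicator) auto
    also have "\<dots> = of_nat (card S)" using SL fS by simp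
    finally show ?thesis by (simp add: nl ennreal_of_nat_eq_real_of_nat)
  qed
  have ind: "\<And>f. integral\<^sup>N (count_space L0) f = (\<integral>\<^sup>+ x. f x * indicator L0 x \<partial>count_space UNIV)"
    by (simp add: nn_integral_count_space_indicator)
  have "(\<integral>\<^sup>+ \<omega>. ennreal (real (num_labels D \<omega>)) \<partial>GW_space p \<mu> \<theta> D)
      = (\<integral>\<^sup>+ \<omega>. \<integral>\<^sup>+ v. indicator (Ev M v) \<omega> \<partial>count_space L0 \<partial>Pi\<^sub>M UNIV M)"
    unfolding Om step1 ..
  also have "\<dots> = (\<integral>\<^sup>+ v. \<integral>\<^sup>+ \<omega>. indicator (Ev M v) \<omega> \<partial>Pi\<^sub>M UNIV M \<partial>count_space L0)"
    by (rule nn_integral_count_space_nn_integral) (auto intro: borel_measurable_indicator EvS)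
  also have "\<dots> = (\<integral>\<^sup>+ v. ennreal (r (length v)) * (\<Prod>k<length v. q (v!k)) \<partial>count_space L0)"
    by (intro nn_integral_cong)
       (simp add: EvS emeasure_Ev[OF assms(2,3), of p D, folded M_def] r_def q_def)
  also have "\<dots> = (\<integral>\<^sup>+ v. (\<Sum>d\<le>D. ennreal (r d) * ((\<Prod>k<length v. q (v!k)) * indicator {v. length v = d} v)) \<partial>count_space UNIV)"
    unfolding ind
  proof (rule nn_integral_cong)
    fix v :: "nat list"
    have "(\<Sum>d\<le>D. ennreal (r d) * ((\<Prod>k<length v. q (v!k)) * indicator {v. length v = d} v))
        = (\<Sum>d\<in>{..D} \<inter> {length v}. ennreal (r d) * (\<Prod>k<length v. q (v!k)))"
      by (rule sum.mono_neutral_cong_right) (auto split: split_indicator)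
    then show "ennreal (r (length v)) * (\<Prod>k<length v. q (v!k)) * indicator L0 v
        = (\<Sum>d\<le>D. ennreal (r d) * ((\<Prod>k<length v. q (v!k)) * indicator {v. length v = d} v))"
      by (cases "length v \<le> D") (auto simp: L0_def Int_absorb1 Int_commute)
  qed
  also have "\<dots> = (\<Sum>d\<le>D. ennreal (r d) * (\<integral>\<^sup>+ v. (\<Prod>k<length v. q (v!k)) * indicator {v. length v = d} v \<partial>count_space UNIV))"
    by (subst nn_integral_sum) (auto intro!: sum.cong nn_integral_cmult)
  also have "\<dots> = (\<Sum>d\<le>D. ennreal (r d) * ennreal \<mu> ^ d)"
    by (simp only: level_integral) (simp add: q_def mean_tail assms(4))
  also have "\<dots> = ennreal (\<Sum>d\<le>D. r d * \<mu> ^ d)"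
    using assms(2) r_nn by (simp add: ennreal_power ennreal_mult'[symmetric] sum_ennreal)
  also have "\<dots> = ennreal (K \<mu> D \<theta>)"
    using arith_K[OF assms(1,2,3)] by (simp add: r_def)
  finally show ?thesis .
qed

end
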